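(* Let $\rho\in[-1,1]$ and $M\sim\mathrm{Elliptic}(n,\rho)$. Let $\boldsymbol q\in\mathbb{R}^n$ be a deterministic unit-norm vector and $P$ a deterministic orthogonal projection matrix onto a subspace of $\mathbb{R}^n$ with $P\boldsymbol q=0$. Then $$(M-\rho PM^\top)\boldsymbol q\sim\mathcal N\big(0,\ I-\rho^2P+\rho\,\boldsymbol q\boldsymbol q^\top\big).$$
   Context: $M\sim\mathrm{Elliptic}(n,\rho)$ means: $M_{ii}\sim\mathcal N(0,1+\rho)$, for $i<j$ $(M_{ij},M_{ji})$ is centered Gaussian with variances 1 and covariance $\rho$, and all elements of $\{M_{ii}\}_i\cup\{(M_{ij},M_{ji})\}_{i<j}$ are independent. *)

theory Defs
  imports "HOL-Probability.Probability"
begin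

definition centered_normal :: "real \<Rightarrow> real measure" where
  "centered_normal v =
     (if v = 0 then return lborel 0 else density lborel (normal_density 0 (sqrt v)))"

text \<open>A centered (possibly degenerate) Gaussian random vector with covariance
  quadratic form Q: every linear functional u \<bullet> X is centered normal with
  variance Q u.\<close>
definition centered_gaussian_vec ::
  "'w measure \<Rightarrow> ('w \<Rightarrow> 'b::euclidean_space) \<Rightarrow> ('b \<Rightarrow> real) \<Rightarrow> bool" where
  "centered_gaussian_vec \<Omega> X Q \<longleftrightarrow>
     X \<in> borel_measurable \<Omega> \<and>
     (\<forall>u. distr \<Omega> lborel (\<lambda>\<omega>. u \<bullet> X \<omega>) = centered_normal (Q u))"

definition outer :: "real^'n \<Rightarrow> real^'n \<Rightarrow> real^'n^'n" where
  "outer p q = (\<chi> i j. p $ i * q $ j)"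

text \<open>The independent family is indexed by
  pairs (i,j) with i \<le> j: for i < j it is the pair (M_ij, M_ji); for i = j the
  pair (M_ii, M_ii) which generates the same sigma-algebra as M_ii.\<close>
definition elliptic ::
  "'w measure \<Rightarrow> real \<Rightarrow> ('w \<Rightarrow> real^('n::{finite,linorder})^('n::{finite,linorder})) \<Rightarrow> bool" where
  "elliptic \<Omega> \<rho> M \<longleftrightarrow>
     prob_space \<Omega> \<and>
     M \<in> borel_measurable \<Omega> \<and>
     (\<forall>i. distr \<Omega> lborel (\<lambda>\<omega>. M \<omega> $ i $ i) = centered_normal (1 + \<rho>)) \<and>
     (\<forall>i j. i < j \<longrightarrow>
        centered_gaussian_vec \<Omega> (\<lambda>\<omega>. (M \<omega> $ i $ j, M \<omega> $ j $ i))
          (\<lambda>(a, b). a\<^sup>2 + b\<^sup>2 + 2 * \<rho> * a * b)) \<and>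
     prob_space.indep_vars \<Omega> (\<lambda>_. borel)
        (\<lambda>(i, j) \<omega>. (M \<omega> $ i $ j, M \<omega> $ j $ i)) {(i, j). i \<le> j}"

end

theory Submission
  imports Defs
begin


lemma char_distr_eq:
  assumes "f \<in> borel_measurable \<Omega>"
  shows "char (distr \<Omega> borel f) t = (CLINT x|\<Omega>. iexp (t * f x))"
  using assms by (simp add: char_def integral_distr)

lemma char_distr_scale:
  assumes "f \<in> borel_measurable \<Omega>"
  shows "char (distr \<Omega> borel (\<lambda>x. c * f x)) t = char (distr \<Omega> borel f) (t * c)"
  using assms by (simp add: char_distr_eq mult.assoc)

lemma distr_lborel_borel: "distr \<Omega> lborel f = distr \<Omega> borel f"
  by (rule distr_cong) auto

lemma real_distribution_cn: "0 \<le> v \<Longrightarrow> real_distribution (centered_normal v)"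
  unfolding centered_normal_def real_distribution_def real_distribution_axioms_def
  by (auto intro!: prob_space_return prob_space_normal_density)

lemma char_cn:
  assumes "0 \<le> v"
  shows "char (centered_normal v) t = complex_of_real (exp (- (v * t^2) / 2))"
proof (cases "v = 0")
  case True
  then show ?thesis by (simp add: centered_normal_def char_def integral_return)
next
  case False
  let ?S = "std_normal_distribution"
  let ?s = "sqrt v"
  have sp: "0 < ?s" using False assms by simp
  interpret S: prob_space ?S by (rule prob_space_normal_density) simp
  have d: "distributed ?S lborel (\<lambda>x. x) std_normal_density"
    unfolding distributed_def by (simp add: distr_id2)
  have "distributed ?S lborel (\<lambda>x. 0 + ?s * x) (normal_density (0 + ?s * 0) (\<bar>?s\<bar> * 1))"
    by (rule S.normal_density_affine[OF d]) (use sp in auto)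
  then have "distr ?S lborel (\<lambda>x. ?s * x) = density lborel (normal_density 0 ?s)"
    using sp by (simp add: distributed_def)
  then have eq: "centered_normal v = distr ?S borel (\<lambda>x. ?s * x)"
    using False by (simp add: centered_normal_def distr_lborel_borel)
  have "char (centered_normal v) t = char (distr ?S borel (\<lambda>x. x)) (t * ?s)"
    unfolding eq by (rule char_distr_scale) simp
  also have "\<dots> = char ?S (t * ?s)" by (simp add: distr_id2)
  also have "\<dots> = complex_of_real (exp (- (v * t^2) / 2))"
    using assms by (simp add: char_std_normal_distribution power_mult_distrib mult.commute)
  finally show ?thesis .
qed

lemma cn_by_char:
  assumes "prob_space \<Omega>" "X \<in> borel_measurable \<Omega>" "0 \<le> v"
    and "\<And>t. char (distr \<Omega> borel X) t = complex_of_real (exp (- (v * t^2) / 2))"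
  shows "distr \<Omega> lborel X = centered_normal v"
  unfolding distr_lborel_borel
  apply (rule Levy_uniqueness)
  using assms real_distribution_cn char_cn prob_space.real_distribution_distr by auto



lemma scaleR_mv: "((c::real) *\<^sub>R (A::real^'n^'m)) *v x = c *\<^sub>R (A *v x)"
  by (simp add: vec_eq_iff matrix_vector_mult_def sum_distrib_left mult.assoc)

lemma inner_sym_mv:
  assumes "transpose P = (P::real^'n^'n)"
  shows "u \<bullet> (P *v y) = (P *v u) \<bullet> y"
proof -
  have "u \<bullet> (P *v y) = (u v* P) \<bullet> y" by (simp add: dot_lmul_matrix)
  also have "u v* P = P *v u" using vector_transpose_matrix[of u P] assms by simp
  finally show ?thesis .
qed

lemma decomp:
  assumes "transpose P = (P::real^'n^'n)"
  shows "u \<bullet> ((A - \<rho> *\<^sub>R (P ** transpose A)) *v q) =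
     (\<Sum>i\<in>UNIV. \<Sum>j\<in>UNIV. A$i$j * (u$i*q$j - \<rho>*q$i*(P*v u)$j))"
proof -
  define w where "w = P *v u"
  have "u \<bullet> ((A - \<rho> *\<^sub>R (P ** transpose A)) *v q)
      = u \<bullet> (A *v q) - \<rho> * (w \<bullet> (transpose A *v q))"
    unfolding w_def by (simp add: matrix_vector_mult_diff_rdistrib scaleR_mv inner_diff_right
        matrix_vector_mul_assoc[symmetric] inner_sym_mv[OF assms])
  also have "u \<bullet> (A *v q) = (\<Sum>i\<in>UNIV. \<Sum>j\<in>UNIV. A$i$j * (u$i*q$j))"
    by (simp add: inner_vec_def matrix_vector_mult_def sum_distrib_left ac_simps)
  also have "w \<bullet> (transpose A *v q) = (\<Sum>j\<in>UNIV. \<Sum>i\<in>UNIV. A$i$j * (q$i * w$j))"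
    unfolding inner_vec_def matrix_vector_mult_def[of "transpose A"]
    by (simp add: transpose_def sum_distrib_left ac_simps)
  also have "\<dots> = (\<Sum>i\<in>UNIV. \<Sum>j\<in>UNIV. A$i$j * (q$i * w$j))"
    by (rule sum.swap)
  finally show ?thesis
    unfolding w_def[symmetric] by (simp add: sum_distrib_left sum_subtractf[symmetric] algebra_simps)
qed

lemma split_sum:
  fixes g :: "'n::{finite,linorder} \<Rightarrow> 'n \<Rightarrow> real"
  shows "(\<Sum>i\<in>UNIV. \<Sum>j\<in>UNIV. g i j) =
    (\<Sum>p\<in>{(i,j). i \<le> j}. if fst p = snd p then g (fst p) (fst p) else g (fst p) (snd p) + g (snd p) (fst p))"
proof -
  let ?L = "{(i::'n,j). i \<le> j}" and ?G = "{(i::'n,j). j < i}" and ?S = "{(i::'n,j). i < j}"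
  have "(\<Sum>i\<in>UNIV. \<Sum>j\<in>UNIV. g i j) = (\<Sum>p\<in>UNIV. g (fst p) (snd p))"
    by (simp add: sum.cartesian_product case_prod_beta)
  also have "UNIV = ?L \<union> ?G" by auto
  also have "(\<Sum>p\<in>?L \<union> ?G. g (fst p) (snd p)) = (\<Sum>p\<in>?L. g (fst p) (snd p)) + (\<Sum>p\<in>?G. g (fst p) (snd p))"
    by (rule sum.union_disjoint) auto
  also have "(\<Sum>p\<in>?G. g (fst p) (snd p)) = (\<Sum>p\<in>?S. g (snd p) (fst p))"
    by (rule sum.reindex_bij_witness[of _ prod.swap prod.swap]) auto
  also have "(\<Sum>p\<in>?S. g (snd p) (fst p)) = (\<Sum>p\<in>?L. if fst p = snd p then 0 else g (snd p) (fst p))"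
    by (rule sum.mono_neutral_cong_left) auto
  finally show ?thesis
    by (auto simp add: sum.distrib[symmetric] intro!: sum.cong)
qed



lemma sep2: "(\<Sum>i\<in>UNIV. \<Sum>j\<in>UNIV. (f i::real) * g j) = (\<Sum>i\<in>UNIV. f i) * (\<Sum>j\<in>UNIV. g j)"
  by (simp add: sum_product)

lemma sep2c: "(\<Sum>i\<in>UNIV. \<Sum>j\<in>UNIV. (k::real) * ((f i::real) * g j)) = k * ((\<Sum>i\<in>UNIV. f i) * (\<Sum>j\<in>UNIV. g j))"
  by (simp add: sum_product sum_distrib_left[symmetric])

lemma var_identity:
  fixes q u :: "real^'n" and P :: "real^'n^'n" and \<rho> :: real
  assumes "norm q = 1" "P ** P = P" "transpose P = P" "P *v q = 0"
  defines "w \<equiv> P *v u"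
  defines "c \<equiv> \<lambda>i j. u$i*q$j - \<rho>*q$i*w$j"
  shows "(\<Sum>i\<in>UNIV. \<Sum>j\<in>UNIV. (c i j)\<^sup>2 + \<rho> * c i j * c j i) =
     u \<bullet> ((mat 1 - \<rho>\<^sup>2 *\<^sub>R P + \<rho> *\<^sub>R outer q q) *v u)"
proof -
  have F1: "(\<Sum>j\<in>UNIV. q$j * q$j) = 1"
  proof -
    have "q \<bullet> q = 1" using assms(1) by (simp add: norm_eq_1)
    then show ?thesis by (simp add: inner_vec_def)
  qed
  have "q \<bullet> w = 0" unfolding w_def
    by (simp add: inner_sym_mv[OF assms(3)] assms(4))
  then have F2: "(\<Sum>j\<in>UNIV. q$j * w$j) = 0" by (simp add: inner_vec_def)
  have "w \<bullet> w = (P *v w) \<bullet> u" unfolding w_def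
    by (subst inner_sym_mv[OF assms(3)]) (simp add: inner_commute)
  also have "P *v w = w" unfolding w_def by (simp add: matrix_vector_mul_assoc assms(2))
  finally have F3: "(\<Sum>j\<in>UNIV. w$j * w$j) = (\<Sum>j\<in>UNIV. u$j * w$j)"
    by (simp add: inner_vec_def mult.commute)
  have uo: "u \<bullet> (outer q q *v u) = (\<Sum>j\<in>UNIV. u$j * q$j) * (\<Sum>j\<in>UNIV. u$j * q$j)"
    by (simp add: inner_vec_def outer_def matrix_vector_mult_def sum_product sum_distrib_left ac_simps)
  have R: "u \<bullet> ((mat 1 - \<rho>\<^sup>2 *\<^sub>R P + \<rho> *\<^sub>R outer q q) *v u) =
      (\<Sum>j\<in>UNIV. u$j * u$j) - \<rho>\<^sup>2 * (\<Sum>j\<in>UNIV. u$j * w$j) + \<rho> * ((\<Sum>j\<in>UNIV. u$j * q$j) * (\<Sum>j\<in>UNIV. u$j * q$j))"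
    unfolding uo[symmetric]
    by (simp add: matrix_vector_mult_add_rdistrib matrix_vector_mult_diff_rdistrib scaleR_mv
        inner_add_right inner_diff_right w_def) (simp add: inner_vec_def)
  have e: "(c i j)\<^sup>2 + \<rho> * c i j * c j i =
      (u$i*u$i) * (q$j*q$j) - 2*\<rho> * ((u$i*q$i) * (q$j*w$j)) + \<rho>\<^sup>2 * ((q$i*q$i) * (w$j*w$j))
      + \<rho> * ((u$i*q$i) * (u$j*q$j)) - \<rho>\<^sup>2 * ((u$i*w$i) * (q$j*q$j)) - \<rho>\<^sup>2 * ((q$i*q$i) * (u$j*w$j))
      + \<rho>^3 * ((q$i*w$i)*(q$j*w$j))" for i j
    unfolding c_def by (simp add: power2_eq_square power3_eq_cube algebra_simps)
  show ?thesis
    unfolding e R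
    by (simp only: sum.distrib sum_subtractf sep2 sep2c F1 F2 F3)
qed



lemma quad_nonneg:
  fixes a b \<rho> :: real
  assumes "-1 \<le> \<rho>" "\<rho> \<le> 1"
  shows "0 \<le> a\<^sup>2 + b\<^sup>2 + 2 * \<rho> * a * b"
proof -
  have "\<bar>\<rho> * (a * b)\<bar> \<le> \<bar>a * b\<bar>"
    using assms by (simp add: abs_mult mult_left_le_one_le)
  then have h: "- \<bar>a * b\<bar> \<le> \<rho> * (a * b)" by linarith
  have "0 \<le> (\<bar>a\<bar> - \<bar>b\<bar>)\<^sup>2" by simp
  also have "(\<bar>a\<bar> - \<bar>b\<bar>)\<^sup>2 = a\<^sup>2 + b\<^sup>2 - 2 * \<bar>a * b\<bar>"
    by (simp add: power2_eq_square algebra_simps abs_mult)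
  finally show ?thesis using h by (simp add: algebra_simps)
qed

theorem proposition3:
  fixes \<Omega> :: "'w measure"
    and M :: "'w \<Rightarrow> real^('n::{finite,linorder})^('n::{finite,linorder})"
    and \<rho> :: real and q :: "real^('n::{finite,linorder})" and P :: "real^('n::{finite,linorder})^('n::{finite,linorder})"
  assumes "-1 \<le> \<rho>" and "\<rho> \<le> 1"
    and "elliptic \<Omega> \<rho> M"
    and "norm q = 1"
    and "P ** P = P" and "transpose P = P"
    and "P *v q = 0"
  shows "centered_gaussian_vec \<Omega>
           (\<lambda>\<omega>. (M \<omega> - \<rho> *\<^sub>R (P ** transpose (M \<omega>))) *v q)
           (\<lambda>u. u \<bullet> ((mat 1 - \<rho>\<^sup>2 *\<^sub>R P + \<rho> *\<^sub>R outer q q) *v u))"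
proof -
  define X where "X = (\<lambda>\<omega>. (M \<omega> - \<rho> *\<^sub>R (P ** transpose (M \<omega>))) *v q)"
  define T where "T = {(i::'n, j). i \<le> j}"
  define Z where "Z = (\<lambda>p \<omega>. (M \<omega> $ fst p $ snd p, M \<omega> $ snd p $ fst p))"
  have ps: "prob_space \<Omega>"
    and diag: "\<And>i. distr \<Omega> lborel (\<lambda>\<omega>. M \<omega> $ i $ i) = centered_normal (1 + \<rho>)"
    and pair: "\<And>i j. i < j \<Longrightarrow> centered_gaussian_vec \<Omega> (\<lambda>\<omega>. (M \<omega> $ i $ j, M \<omega> $ j $ i))
          (\<lambda>(a, b). a\<^sup>2 + b\<^sup>2 + 2 * \<rho> * a * b)"
    and ind0: "prob_space.indep_vars \<Omega> (\<lambda>_. borel)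
        (\<lambda>(i, j) \<omega>. (M \<omega> $ i $ j, M \<omega> $ j $ i)) {(i, j). i \<le> j}"
    using assms(3) unfolding elliptic_def by auto
  interpret prob_space \<Omega> by (rule ps)
  have Zeq: "(\<lambda>(i, j) \<omega>. (M \<omega> $ i $ j, M \<omega> $ j $ i)) = Z"
    unfolding Z_def by (auto simp: fun_eq_iff)
  have indZ: "indep_vars (\<lambda>_. borel) Z T"
    using ind0 unfolding Zeq T_def .
  have Zrv: "\<And>p. p \<in> T \<Longrightarrow> Z p \<in> borel_measurable \<Omega>"
    using indZ unfolding indep_vars_def2 by auto
  have key: "(\<lambda>\<omega>. u \<bullet> X \<omega>) \<in> borel_measurable \<Omega> \<and>
      distr \<Omega> lborel (\<lambda>\<omega>. u \<bullet> X \<omega>) = centered_normal (u \<bullet> ((mat 1 - \<rho>\<^sup>2 *\<^sub>R P + \<rho> *\<^sub>R outer q q) *v u))"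
    for u
  proof -
    define w where "w = P *v u"
    define c where "c = (\<lambda>i j. u$i*q$j - \<rho>*q$i*w$j)"
    define g where "g = (\<lambda>(p::'n\<times>'n) (x::real\<times>real). c (fst p) (snd p) * fst x +
        (if fst p = snd p then 0 else c (snd p) (fst p) * snd x))"
    define Y where "Y = (\<lambda>p \<omega>. g p (Z p \<omega>))"
    define v where "v = (\<lambda>p::'n\<times>'n. if fst p = snd p then (1 + \<rho>) * (c (fst p) (fst p))\<^sup>2
        else (c (fst p) (snd p))\<^sup>2 + (c (snd p) (fst p))\<^sup>2 + 2 * \<rho> * c (fst p) (snd p) * c (snd p) (fst p))"
    have gm: "g p \<in> borel_measurable borel" for p
      unfolding g_def
      by (cases "fst p = snd p") (auto intro!: borel_measurable_continuous_onI continuous_intros)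
    have indY: "indep_vars (\<lambda>_. borel) Y T"
      unfolding Y_def by (rule indep_vars_compose2[OF indZ gm])
    have Yrv: "p \<in> T \<Longrightarrow> Y p \<in> borel_measurable \<Omega>" for p
      using indY unfolding indep_vars_def2 by auto
    have sumeq: "u \<bullet> X \<omega> = (\<Sum>p\<in>T. Y p \<omega>)" for \<omega>
    proof -
      have "u \<bullet> X \<omega> = (\<Sum>i\<in>UNIV. \<Sum>j\<in>UNIV. M \<omega> $i$j * c i j)"
        unfolding X_def decomp[OF assms(6)] c_def w_def ..
      also have "\<dots> = (\<Sum>p\<in>T. Y p \<omega>)"
        unfolding split_sum T_def Y_def g_def Z_def
        by (rule sum.cong) (auto simp: algebra_simps)
      finally show ?thesis .
    qed
    have meas: "(\<lambda>\<omega>. u \<bullet> X \<omega>) \<in> borel_measurable \<Omega>"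
      unfolding sumeq using Yrv by (auto intro!: borel_measurable_sum)
    have vnn: "0 \<le> v p" if "p \<in> T" for p
    proof (cases "fst p = snd p")
      case True
      have "0 \<le> 1 + \<rho>" using assms(1) by simp
      then show ?thesis using True by (simp add: v_def)
    next
      case False
      then show ?thesis
        using quad_nonneg[OF assms(1,2), of "c (fst p) (snd p)" "c (snd p) (fst p)"]
        by (simp add: v_def)
    qed
    have charY: "char (distr \<Omega> borel (Y p)) t = complex_of_real (exp (- (v p * t^2) / 2))"
      if "p \<in> T" for p t
    proof (cases "fst p = snd p")
      case True
      define i where "i = fst p"
      have Yp: "Y p = (\<lambda>\<omega>. c i i * M \<omega> $ i $ i)"
        unfolding Y_def g_def Z_def i_def using True by (auto simp: fun_eq_iff)
      have "(\<lambda>\<omega>. fst (Z p \<omega>)) \<in> borel_measurable \<Omega>"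
        by (rule measurable_compose[OF Zrv[OF that]])
           (auto intro!: borel_measurable_continuous_onI continuous_intros)
      then have mi: "(\<lambda>\<omega>. M \<omega> $ i $ i) \<in> borel_measurable \<Omega>"
        unfolding Z_def i_def using True by simp
      have "char (distr \<Omega> borel (Y p)) t = char (distr \<Omega> borel (\<lambda>\<omega>. M \<omega> $ i $ i)) (t * c i i)"
        unfolding Yp by (rule char_distr_scale[OF mi])
      also have "\<dots> = char (centered_normal (1 + \<rho>)) (t * c i i)"
        using diag[of i] by (simp add: distr_lborel_borel)
      also have "\<dots> = complex_of_real (exp (- (v p * t^2) / 2))"
        using assms(1) True unfolding v_def i_def
        by (subst char_cn) (auto simp: power_mult_distrib algebra_simps)
      finally show ?thesis .
    next
      case False
      define i where "i = fst p"
      define j where "j = snd p"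
      have ij: "i < j" using that False unfolding T_def i_def j_def by auto
      have Yp: "Y p = (\<lambda>\<omega>. (c i j, c j i) \<bullet> (M \<omega> $ i $ j, M \<omega> $ j $ i))"
        unfolding Y_def g_def Z_def i_def j_def using False by (auto simp: fun_eq_iff)
      have "distr \<Omega> lborel (\<lambda>\<omega>. (c i j, c j i) \<bullet> (M \<omega> $ i $ j, M \<omega> $ j $ i)) =
          centered_normal ((\<lambda>(a, b). a\<^sup>2 + b\<^sup>2 + 2 * \<rho> * a * b) (c i j, c j i))"
        using pair[OF ij] unfolding centered_gaussian_vec_def by (rule conjunct2[THEN spec])
      then have "distr \<Omega> lborel (Y p) = centered_normal (v p)"
        unfolding Yp using False by (simp add: v_def i_def j_def)
      then show ?thesis
        using char_cn[OF vnn[OF that]] by (simp add: distr_lborel_borel)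
    qed
    have vsum: "(\<Sum>p\<in>T. v p) = u \<bullet> ((mat 1 - \<rho>\<^sup>2 *\<^sub>R P + \<rho> *\<^sub>R outer q q) *v u)"
    proof -
      have "(\<Sum>p\<in>T. v p) = (\<Sum>i\<in>UNIV. \<Sum>j\<in>UNIV. (c i j)\<^sup>2 + \<rho> * c i j * c j i)"
        unfolding split_sum T_def v_def
        by (rule sum.cong) (auto simp: algebra_simps power2_eq_square)
      also have "\<dots> = u \<bullet> ((mat 1 - \<rho>\<^sup>2 *\<^sub>R P + \<rho> *\<^sub>R outer q q) *v u)"
        unfolding c_def w_def by (rule var_identity[OF assms(4-7)])
      finally show ?thesis .
    qed
    have "distr \<Omega> lborel (\<lambda>\<omega>. \<Sum>p\<in>T. Y p \<omega>) = centered_normal (\<Sum>p\<in>T. v p)"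
    proof (rule cn_by_char[OF ps])
      show "(\<lambda>\<omega>. \<Sum>p\<in>T. Y p \<omega>) \<in> borel_measurable \<Omega>"
        using Yrv by (auto intro!: borel_measurable_sum)
      show "0 \<le> (\<Sum>p\<in>T. v p)" using vnn by (auto intro: sum_nonneg)
      fix t
      have "char (distr \<Omega> borel (\<lambda>\<omega>. \<Sum>p\<in>T. Y p \<omega>)) t = (\<Prod>p\<in>T. char (distr \<Omega> borel (Y p)) t)"
        by (rule char_distr_sum[OF indY])
      also have "\<dots> = (\<Prod>p\<in>T. complex_of_real (exp (- (v p * t^2) / 2)))"
        using charY by (auto intro!: prod.cong)
      also have "\<dots> = complex_of_real (exp (- ((\<Sum>p\<in>T. v p) * t^2) / 2))"
      proof -
        have "(\<Sum>p\<in>T. - (v p * t^2) / 2) = - ((\<Sum>p\<in>T. v p) * t^2) / 2"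
          by (simp add: sum_divide_distrib[symmetric] sum_distrib_right[symmetric] sum_negf)
        then have "exp (- ((\<Sum>p\<in>T. v p) * t^2) / 2) = (\<Prod>p\<in>T. exp (- (v p * t^2) / 2))"
          by (metis exp_sum finite)
        then show ?thesis by simp
      qed
      finally show "char (distr \<Omega> borel (\<lambda>\<omega>. \<Sum>p\<in>T. Y p \<omega>)) t = complex_of_real (exp (- ((\<Sum>p\<in>T. v p) * t^2) / 2))" .
    qed
    then show ?thesis using meas unfolding sumeq[symmetric] vsum by simp
  qed
  have Xm: "X \<in> borel_measurable \<Omega>"
  proof (rule borel_measurable_euclidean_space[THEN iffD2], intro ballI)
    fix b
    have eq: "(\<lambda>x. X x \<bullet> b) = (\<lambda>\<omega>. b \<bullet> X \<omega>)"
      by (rule ext) (rule inner_commute)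
    show "(\<lambda>x. X x \<bullet> b) \<in> borel_measurable \<Omega>"
      unfolding eq using key[of b] by (rule conjunct1)
  qed
  show ?thesis
    unfolding centered_gaussian_vec_def X_def[symmetric]
  proof (intro conjI allI)
    show "X \<in> borel_measurable \<Omega>" by (rule Xm)
  next
    fix u
    show "distr \<Omega> lborel (\<lambda>\<omega>. u \<bullet> X \<omega>) = centered_normal (u \<bullet> ((mat 1 - \<rho>\<^sup>2 *\<^sub>R P + \<rho> *\<^sub>R outer q q) *v u))"
      using key[of u] by (rule conjunct2)
  qed
qed

end
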